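(* Let $R$ be an associative ring with identity and $a,b,c,d\in R$ such that both $a^{\|(b,c)}$ and $d^{\|(b,c)}$ exist. Then the following are equivalent: (i) $aa^{\|(b,c)}=dd^{\|(b,c)}$; (ii) $aa^{\|(b,c)}dd^{\|(b,c)}=dd^{\|(b,c)}aa^{\|(b,c)}$; (iii) $ad^{\|(b,c)}da^{\|(b,c)}=da^{\|(b,c)}ad^{\|(b,c)}$; (iv) $ad^{\|(b,c)}$ is group invertible and $(ad^{\|(b,c)})^{\#}=da^{\|(b,c)}$; (v) $da^{\|(b,c)}$ is group invertible and $(da^{\|(b,c)})^{\#}=ad^{\|(b,c)}$.
   Context: For $a,b,c\in R$, $a$ is $(b,c)$-invertible if there exists $y\in R$ with $y\in (bRy)\cap(yRc)$, $yab=b$ and $cay=c$; such $y$ is unique and denoted $a^{\|(b,c)}$. An element $x\in R$ is group invertible if there is $z\in R$ with $xzx=x$, $zxz=z$, $xz=zx$; such $z$ is unique and denoted $x^{\#}$. *)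

theory Defs
  imports Main
begin

definition is_bc_inverse :: "'a::ring_1 \<Rightarrow> 'a \<Rightarrow> 'a \<Rightarrow> 'a \<Rightarrow> bool" where
  "is_bc_inverse a b c y \<longleftrightarrow>
     (\<exists>r. y = b * r * y) \<and> (\<exists>s. y = y * s * c) \<and> y * a * b = b \<and> c * a * y = c"

definition bc_invertible :: "'a::ring_1 \<Rightarrow> 'a \<Rightarrow> 'a \<Rightarrow> bool" where
  "bc_invertible a b c \<longleftrightarrow> (\<exists>y. is_bc_inverse a b c y)"

definition bc_inv :: "'a::ring_1 \<Rightarrow> 'a \<Rightarrow> 'a \<Rightarrow> 'a" where
  "bc_inv a b c = (THE y. is_bc_inverse a b c y)"

definition is_group_inverse :: "'a::ring_1 \<Rightarrow> 'a \<Rightarrow> bool" where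
  "is_group_inverse x z \<longleftrightarrow> x * z * x = x \<and> z * x * z = z \<and> x * z = z * x"

definition group_invertible :: "'a::ring_1 \<Rightarrow> bool" where
  "group_invertible x \<longleftrightarrow> (\<exists>z. is_group_inverse x z)"

definition group_inv :: "'a::ring_1 \<Rightarrow> 'a" where
  "group_inv x = (THE z. is_group_inverse x z)"

end

theory Submission
  imports Defs
begin

lemma bc_cross:
  fixes a d b c y z :: "'a::ring_1"
  assumes "is_bc_inverse a b c y" "is_bc_inverse d b c z"
  shows "y * a * z = z" "y * d * z = y"
proof -
  from assms obtain r where r: "b * r * z = z" unfolding is_bc_inverse_def by metis
  have "y * a * b = b" using assms(1) unfolding is_bc_inverse_def by blast
  then have "y * a * (b * r * z) = b * r * z" by (simp add: mult.assoc[symmetric])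
  then show "y * a * z = z" using r by simp
  from assms obtain s where s: "y * s * c = y" unfolding is_bc_inverse_def by metis
  have "c * d * z = c" using assms(2) unfolding is_bc_inverse_def by blast
  then have "(y * s * c) * d * z = y * s * c" by (simp add: mult.assoc)
  then show "y * d * z = y" using s by simp
qed

lemma bc_inv_prop:
  assumes "bc_invertible a b c"
  shows "is_bc_inverse a b c (bc_inv a b c)"
proof -
  obtain y where y: "is_bc_inverse a b c y" using assms unfolding bc_invertible_def by blast
  have u: "y2 = y" if "is_bc_inverse a b c y2" for y2
    using bc_cross(1)[OF that y] bc_cross(2)[OF that y] by simp
  show ?thesis unfolding bc_inv_def by (rule theI[of _ y]) (rule y, erule u)
qed

lemma group_inv_unique:
  fixes x z1 z2 :: "'a::ring_1"
  assumes "is_group_inverse x z1" "is_group_inverse x z2"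
  shows "z1 = z2"
proof -
  have a: "x*z1*x = x" "z1*x*z1 = z1" "x*z1 = z1*x" and b: "x*z2*x = x" "z2*x*z2 = z2" "x*z2 = z2*x"
    using assms unfolding is_group_inverse_def by auto
  have "x*z1 = x*z2"
  proof -
    have "x*z1 = (x*z2*x)*z1" using b by simp
    also have "... = x*z2*(x*z1)" by (simp add: mult.assoc)
    also have "... = z2*x*(z1*x)" using a(3) b(3) by simp
    also have "... = z2*(x*z1*x)" by (simp add: mult.assoc)
    also have "... = z2*x" using a by simp
    also have "... = x*z2" using b by simp
    finally show ?thesis .
  qed
  have "z1 = z1*x*z1" using a by simp
  also have "... = x*z1*z1" using a(3) by simp
  also have "... = x*z2*z1" using \<open>x*z1 = x*z2\<close> by simp
  also have "... = z2*(x*z1)" using b(3) by (simp add: mult.assoc)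
  also have "... = z2*(x*z2)" using \<open>x*z1 = x*z2\<close> by simp
  also have "... = z2" using b by (simp add: mult.assoc)
  finally show ?thesis .
qed

lemma group_iff:
  fixes x z :: "'a::ring_1"
  shows "(group_invertible x \<and> group_inv x = z) \<longleftrightarrow> is_group_inverse x z"
proof
  assume h: "group_invertible x \<and> group_inv x = z"
  then obtain w where w: "is_group_inverse x w" unfolding group_invertible_def by blast
  have "is_group_inverse x (group_inv x)" unfolding group_inv_def
    by (rule theI[of _ w]) (rule w, rule group_inv_unique[OF _ w], assumption)
  then show "is_group_inverse x z" using h by simp
next
  assume h: "is_group_inverse x z"
  then show "group_invertible x \<and> group_inv x = z"
    unfolding group_invertible_def group_inv_def using group_inv_unique by blast
qed

theorem theorem4p2:
  fixes a b c d :: "'a::ring_1"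
  assumes "bc_invertible a b c" and "bc_invertible d b c"
  defines "ai \<equiv> bc_inv a b c" and "di \<equiv> bc_inv d b c"
  shows "(a * ai = d * di
           \<longleftrightarrow> a * ai * (d * di) = d * di * (a * ai))
       \<and> (a * ai = d * di
           \<longleftrightarrow> a * di * (d * ai) = d * ai * (a * di))
       \<and> (a * ai = d * di
           \<longleftrightarrow> group_invertible (a * di) \<and> group_inv (a * di) = d * ai)
       \<and> (a * ai = d * di
           \<longleftrightarrow> group_invertible (d * ai) \<and> group_inv (d * ai) = a * di)"
proof -
  have y: "is_bc_inverse a b c ai" using bc_inv_prop[OF assms(1)] ai_def by simp
  have z: "is_bc_inverse d b c di" using bc_inv_prop[OF assms(2)] di_def by simp
  note c1 = bc_cross[OF y z] and c2 = bc_cross[OF z y]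
  have pq: "a * ai * (d * di) = a * ai" using c1(2) by (simp add: mult.assoc[symmetric]) (simp add: mult.assoc)
  have qp: "d * di * (a * ai) = d * di" using c2(2) by (simp add: mult.assoc[symmetric]) (simp add: mult.assoc)
  have XY: "a * di * (d * ai) = a * ai" using c2(1) by (simp add: mult.assoc[symmetric]) (simp add: mult.assoc)
  have YX: "d * ai * (a * di) = d * di" using c1(1) by (simp add: mult.assoc[symmetric]) (simp add: mult.assoc)
  have XYX: "a * di * (d * ai) * (a * di) = a * di"
  proof -
    have "a * di * (d * ai) * (a * di) = a * (ai * a * di)" using XY by (simp add: mult.assoc)
    then show ?thesis using c1(1) by simp
  qed
  have YXY: "d * ai * (a * di) * (d * ai) = d * ai"
  proof -
    have "d * ai * (a * di) * (d * ai) = d * (di * d * ai)" using YX by (simp add: mult.assoc)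
    then show ?thesis using c2(1) by simp
  qed
  have g1: "is_group_inverse (a*di) (d*ai) \<longleftrightarrow> a * ai = d * di"
    unfolding is_group_inverse_def using XY YX XYX YXY by auto
  have g2: "is_group_inverse (d*ai) (a*di) \<longleftrightarrow> a * ai = d * di"
    unfolding is_group_inverse_def using XY YX XYX YXY by auto
  show ?thesis using pq qp XY YX g1 g2 group_iff by auto
qed

end
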